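(* Let $\Omega\subset\mathbb{R}^d$ be a connected, bounded open domain, let $\mu$ be a bounded measurable weight on $\Omega$ with $\mu>0$ almost everywhere, let $\mathbf{r}\in\Upsilon$, and assume the hyperplanes $\mathcal{P}_1(\mathbf{r}_1),\ldots,\mathcal{P}_n(\mathbf{r}_n)$ are pairwise distinct. Then the mass matrix $\mathcal{A}(\mathbf{r})$ is symmetric positive definite.
   Context: $\sigma(t)=\max\{0,t\}$. $\mathcal{S}^{d-1}$ is the unit sphere in $\mathbb{R}^d$. For $\mathbf{x}\in\mathbb{R}^d$ write $\mathbf{y}=(1,x_1,\ldots,x_d)^T$. For $\mathbf{r}_i=(b_i,\boldsymbol{\omega}_i)\in\mathbb{R}^{d+1}$, $\mathcal{P}_i(\mathbf{r}_i)=\{\mathbf{x}\in\Omega:\boldsymbol{\omega}_i\cdot\mathbf{x}+b_i=0\}$; $\Upsilon=\{\mathbf{r}=(\mathbf{r}_1,\ldots,\mathbf{r}_n): \mathbf{r}_i=(b_i,\boldsymbol{\omega}_i),\ b_i\in\mathbb{R},\ \boldsymbol{\omega}_i\in\mathcal{S}^{d-1},\ \mathcal{P}_i(\mathbf{r}_i)\cap\Omega\neq\emptyset\}$. Set $\sigma_0\equiv1$, $\sigma_i(\mathbf{x})=\sigma(\mathbf{r}_i\cdot\mathbf{y})$, and $\hat{\Sigma}(\mathbf{x};\mathbf{r})=(\sigma_0(\mathbf{x}),\sigma_1(\mathbf{x}),\ldots,\sigma_n(\mathbf{x}))^T$. The mass matrix is the $(n+1)\times(n+1)$ matrix $\mathcal{A}(\mathbf{r})=\int_\Omega\mu(\mathbf{x})\hat{\Sigma}(\mathbf{x};\mathbf{r})\hat{\Sigma}(\mathbf{x};\mathbf{r})^T\,d\mathbf{x}$,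 i.e. $a_{ij}=\int_\Omega\mu\,\sigma_i\sigma_j\,d\mathbf{x}$, $i,j=0,\ldots,n$. *)

theory Defs
  imports "HOL-Analysis.Analysis"
begin

definition relu :: "real \<Rightarrow> real" where
  "relu t = max 0 t"

definition hyperplane_in :: "'a::euclidean_space set \<Rightarrow> real \<Rightarrow> 'a \<Rightarrow> 'a set" where
  "hyperplane_in \<Omega> b w = {x \<in> \<Omega>. w \<bullet> x + b = 0}"

text \<open>Membership of r = (r_1,...,r_n), r_i = (b i, w i), in Upsilon.\<close>
definition in_Upsilon :: "'a::euclidean_space set \<Rightarrow> nat \<Rightarrow> (nat \<Rightarrow> real) \<Rightarrow> (nat \<Rightarrow> 'a) \<Rightarrow> bool" where
  "in_Upsilon \<Omega> n b w \<longleftrightarrow>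
     (\<forall>i\<in>{1..n}. w i \<in> sphere 0 1 \<and> hyperplane_in \<Omega> (b i) (w i) \<noteq> {})"

definition sigma_basis :: "(nat \<Rightarrow> real) \<Rightarrow> (nat \<Rightarrow> 'a::euclidean_space) \<Rightarrow> nat \<Rightarrow> 'a \<Rightarrow> real" where
  "sigma_basis b w i x = (if i = 0 then 1 else relu (b i + w i \<bullet> x))"

definition mass_matrix :: "'a::euclidean_space set \<Rightarrow> ('a \<Rightarrow> real) \<Rightarrow> (nat \<Rightarrow> real) \<Rightarrow> (nat \<Rightarrow> 'a) \<Rightarrow> nat \<Rightarrow> nat \<Rightarrow> real" where
  "mass_matrix \<Omega> \<mu> b w i j =
     integral\<^sup>L (lebesgue_on \<Omega>) (\<lambda>x. \<mu> x * sigma_basis b w i x * sigma_basis b w j x)"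

definition sym_pos_def :: "nat \<Rightarrow> (nat \<Rightarrow> nat \<Rightarrow> real) \<Rightarrow> bool" where
  "sym_pos_def n A \<longleftrightarrow>
     (\<forall>i\<le>n. \<forall>j\<le>n. A i j = A j i) \<and>
     (\<forall>c::nat \<Rightarrow> real. (\<exists>i\<le>n. c i \<noteq> 0) \<longrightarrow> (\<Sum>i\<le>n. \<Sum>j\<le>n. c i * A i j * c j) > 0)"

end

theory Submission imports Defs begin

lemma relu_sym: "\<bar>d\<bar> \<le> s \<Longrightarrow> s < \<bar>t\<bar> \<Longrightarrow> relu (t + d) + relu (t - d) - 2 * relu t = 0"
  by (auto simp: relu_def max_def)

lemma relu_k: "s > 0 \<Longrightarrow> relu s + relu (- s) - 2 * relu 0 = s"
  by (auto simp: relu_def)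

lemma geom:
  fixes \<Omega> :: "'a::euclidean_space set"
  assumes op: "open \<Omega>" and U: "in_Upsilon \<Omega> n b w"
    and D: "\<forall>i\<in>{1..n}. \<forall>j\<in>{1..n}. i \<noteq> j \<longrightarrow> hyperplane_in \<Omega> (b i) (w i) \<noteq> hyperplane_in \<Omega> (b j) (w j)"
    and Z: "\<forall>x\<in>\<Omega>. (\<Sum>i\<le>n. c i * sigma_basis b w i x) = 0"
    and k: "k \<in> {1..n}"
  shows "c k = 0"
proof -
  have wk: "norm (w k) = 1" and "hyperplane_in \<Omega> (b k) (w k) \<noteq> {}"
    using U k by (auto simp: in_Upsilon_def)
  then obtain p where p: "p \<in> \<Omega>" "w k \<bullet> p + b k = 0" by (auto simp: hyperplane_in_def)
  have wkk: "w k \<bullet> w k = 1" using wk by (simp add: dot_square_norm)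
  obtain e where e: "e > 0" "ball p e \<subseteq> \<Omega>" using op p by (meson open_contains_ball)
  define J where "J = {1..n} - {k}"
  have fJ: "finite J" by (simp add: J_def)
  define S where "S j = {x. (w j - (w j \<bullet> w k) *\<^sub>R w k) \<bullet> x = - (b j - b k * (w j \<bullet> w k))}" for j
  have negS: "negligible (S j)" if j: "j \<in> J" for j
  proof -
    have "w j - (w j \<bullet> w k) *\<^sub>R w k \<noteq> 0 \<or> - (b j - b k * (w j \<bullet> w k)) \<noteq> 0"
    proof (rule ccontr)
      assume "\<not> ?thesis"
      hence h1: "w j = (w j \<bullet> w k) *\<^sub>R w k" and h2: "b j = b k * (w j \<bullet> w k)" by auto
      define l where "l = w j \<bullet> w k"
      have wj: "norm (w j) = 1" using U j by (auto simp: in_Upsilon_def J_def)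
      have "norm (w j) = \<bar>l\<bar>" using h1 wk by (metis l_def norm_scaleR mult.right_neutral)
      hence l0: "l \<noteq> 0" using wj by auto
      have eq: "w j \<bullet> x + b j = l * (w k \<bullet> x + b k)" for x
      proof -
        have "w j = l *\<^sub>R w k" "b j = b k * l" using h1 h2 by (simp_all add: l_def)
        thus ?thesis by (simp add: algebra_simps)
      qed
      have "hyperplane_in \<Omega> (b j) (w j) = hyperplane_in \<Omega> (b k) (w k)"
        unfolding hyperplane_in_def using eq l0 by auto
      thus False using D j k by (auto simp: J_def)
    qed
    thus ?thesis unfolding S_def by (rule negligible_hyperplane)
  qed
  have nU: "negligible (\<Union>j\<in>J. S j)" using fJ negS by (intro negligible_Union) auto
  have nB: "\<not> negligible (ball p (e/2))" using e by (intro open_not_negligible) auto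
  have "\<not> ball p (e/2) \<subseteq> (\<Union>j\<in>J. S j)"
  proof
    assume "ball p (e/2) \<subseteq> (\<Union>j\<in>J. S j)"
    from negligible_subset[OF nU this] nB show False by simp
  qed
  then obtain x0 where x0: "x0 \<in> ball p (e/2)" "\<forall>j\<in>J. x0 \<notin> S j" by blast
  define q where "q = x0 - (b k + w k \<bullet> x0) *\<^sub>R w k"
  have qk: "w k \<bullet> q + b k = 0" unfolding q_def using wkk by (simp add: algebra_simps)
  have qj: "w j \<bullet> q + b j \<noteq> 0" if "j \<in> J" for j
  proof -
    have "w j \<bullet> q + b j = (w j - (w j \<bullet> w k) *\<^sub>R w k) \<bullet> x0 + (b j - b k * (w j \<bullet> w k))"
      unfolding q_def by (simp add: algebra_simps inner_commute)
    thus ?thesis using x0(2) that unfolding S_def by auto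
  qed
  have "b k + w k \<bullet> x0 = w k \<bullet> (x0 - p)" using p(2) by (simp add: inner_diff_right)
  hence "q - p = (x0 - p) - (w k \<bullet> (x0 - p)) *\<^sub>R w k" unfolding q_def by simp
  hence "norm (q - p) \<le> norm (x0 - p) + \<bar>w k \<bullet> (x0 - p)\<bar> * norm (w k)"
    by (metis norm_scaleR norm_triangle_ineq4 real_norm_def)
  also have "\<dots> \<le> norm (x0 - p) + norm (x0 - p)"
    using Cauchy_Schwarz_ineq2[of "w k" "x0 - p"] wk by simp
  also have "\<dots> < e" using x0(1) by (simp add: dist_norm norm_minus_commute)
  finally have "q \<in> ball p e" by (simp add: dist_norm norm_minus_commute)
  hence qO: "q \<in> \<Omega>" using e by auto
  obtain d where d: "d > 0" "ball q d \<subseteq> \<Omega>" using op qO by (meson open_contains_ball)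
  define M where "M = Min (insert d ((\<lambda>j. \<bar>w j \<bullet> q + b j\<bar>) ` J))"
  have M0: "M > 0" unfolding M_def using fJ d qj by (subst Min_gr_iff) auto
  have Md: "M \<le> d" unfolding M_def using fJ by auto
  have MJ: "M \<le> \<bar>w j \<bullet> q + b j\<bar>" if "j \<in> J" for j unfolding M_def using fJ that by auto
  define s where "s = M / 2"
  have s0: "s > 0" and sd: "s < d" and sJ: "\<And>j. j \<in> J \<Longrightarrow> s < \<bar>w j \<bullet> q + b j\<bar>"
    using M0 Md MJ by (auto simp: s_def) (smt (verit) MJ)
  have "q + s *\<^sub>R w k \<in> \<Omega>" "q - s *\<^sub>R w k \<in> \<Omega>" using d sd s0 wk by (auto simp: dist_norm)
  hence Zs: "(\<Sum>i\<le>n. c i * sigma_basis b w i (q + s *\<^sub>R w k)) + (\<Sum>i\<le>n. c i * sigma_basis b w i (q - s *\<^sub>R w k))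
      - 2 * (\<Sum>i\<le>n. c i * sigma_basis b w i q) = 0" using Z qO by simp
  have Dj: "sigma_basis b w i (q + s *\<^sub>R w k) + sigma_basis b w i (q - s *\<^sub>R w k) - 2 * sigma_basis b w i q
      = (if i = k then s else 0)" if i: "i \<le> n" for i
  proof (cases "i = 0")
    case True thus ?thesis using k by (simp add: sigma_basis_def)
  next
    case False
    show ?thesis
    proof (cases "i = k")
      case True
      have "b k + w k \<bullet> (q + s *\<^sub>R w k) = s" "b k + w k \<bullet> (q - s *\<^sub>R w k) = - s" "b k + w k \<bullet> q = 0"
        using qk wkk by (simp_all add: algebra_simps)
      thus ?thesis using True False relu_k[OF s0] by (simp add: sigma_basis_def)
    next
      case F2: False
      hence iJ: "i \<in> J" using False i by (auto simp: J_def)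
      have "\<bar>s * (w i \<bullet> w k)\<bar> \<le> s"
      proof -
        have "\<bar>w i \<bullet> w k\<bar> \<le> 1" using Cauchy_Schwarz_ineq2[of "w i" "w k"] wk U iJ
          by (auto simp: in_Upsilon_def J_def)
        thus ?thesis using s0 by (simp add: abs_mult mult_left_le)
      qed
      note r = relu_sym[OF this sJ[OF iJ]]
      have e1: "b i + w i \<bullet> (q + s *\<^sub>R w k) = (w i \<bullet> q + b i) + s * (w i \<bullet> w k)"
        and e2: "b i + w i \<bullet> (q - s *\<^sub>R w k) = (w i \<bullet> q + b i) - s * (w i \<bullet> w k)"
        and e3: "b i + w i \<bullet> q = w i \<bullet> q + b i" by (simp_all add: algebra_simps)
      show ?thesis unfolding sigma_basis_def using False F2 r by (simp only: e1 e2 e3 if_False)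
    qed
  qed
  have "0 = (\<Sum>i\<le>n. c i * (sigma_basis b w i (q + s *\<^sub>R w k) + sigma_basis b w i (q - s *\<^sub>R w k) - 2 * sigma_basis b w i q))"
    using Zs by (simp add: sum_subtractf sum.distrib sum_distrib_left algebra_simps)
  also have "\<dots> = (\<Sum>i\<le>n. c i * (if i = k then s else 0))" using Dj by (intro sum.cong) auto
  also have "\<dots> = c k * s" using k by (simp add: if_distrib sum.delta cong: if_cong)
  finally show ?thesis using s0 by simp
qed

lemma cont_sigma: "continuous_on S (sigma_basis b w i)"
  by (cases "i = 0") (auto simp: sigma_basis_def relu_def intro!: continuous_intros)

lemma zero_on_open:
  fixes \<Omega> :: "'a::euclidean_space set"
  assumes op: "open \<Omega>" and cf: "continuous_on \<Omega> f"
    and ae: "AE x in lebesgue_on \<Omega>. f x = (0::real)"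
    and x: "x \<in> \<Omega>"
  shows "f x = 0"
proof (rule ccontr)
  assume fx: "f x \<noteq> 0"
  define U where "U = {y \<in> \<Omega>. f y \<noteq> 0}"
  have oU: "open U"
  proof -
    have "openin (top_of_set \<Omega>) (\<Omega> \<inter> f -` (UNIV - {0}))"
      using cf by (intro continuous_openin_preimage_gen) auto
    hence "open (\<Omega> \<inter> f -` (UNIV - {0}))" using op by (rule openin_open_trans)
    moreover have "\<Omega> \<inter> f -` (UNIV - {0}) = U" by (auto simp: U_def)
    ultimately show ?thesis by simp
  qed
  have UO: "U \<subseteq> \<Omega>" by (auto simp: U_def)
  have Ul: "U \<in> sets lebesgue" using oU by auto
  have Os: "\<Omega> \<in> sets lebesgue" using op by auto
  have e1: "{y \<in> space (lebesgue_on \<Omega>). \<not> f y = 0} = U" by (auto simp: U_def)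
  have e2: "U \<in> sets (lebesgue_on \<Omega>)" using Ul UO Os by (simp add: sets_restrict_space_iff)
  have "emeasure (lebesgue_on \<Omega>) U = 0" using AE_iff_measurable[OF e2 e1] ae by simp
  hence "emeasure lebesgue U = 0" using UO Os by (simp add: emeasure_restrict_space)
  hence "negligible U" using Ul by (simp add: negligible_iff_null_sets null_setsI)
  moreover have "U \<noteq> {}" using fx x by (auto simp: U_def)
  ultimately show False using open_not_negligible[OF oU] by simp
qed

theorem lemma4p1:
  fixes \<Omega> :: "'a::euclidean_space set"
    and \<mu> :: "'a \<Rightarrow> real"
    and n :: nat
    and b :: "nat \<Rightarrow> real"
    and w :: "nat \<Rightarrow> 'a"
  assumes "open \<Omega>" and "connected \<Omega>" and "bounded \<Omega>" and "\<Omega> \<noteq> {}"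
    and "\<mu> \<in> borel_measurable (lebesgue_on \<Omega>)"
    and "\<exists>B. \<forall>x\<in>\<Omega>. \<bar>\<mu> x\<bar> \<le> B"
    and "AE x in lebesgue_on \<Omega>. \<mu> x > 0"
    and "in_Upsilon \<Omega> n b w"
    and "\<forall>i\<in>{1..n}. \<forall>j\<in>{1..n}. i \<noteq> j \<longrightarrow> hyperplane_in \<Omega> (b i) (w i) \<noteq> hyperplane_in \<Omega> (b j) (w j)"
  shows "sym_pos_def n (mass_matrix \<Omega> \<mu> b w)"
proof -
  note op = assms(1) and bd = assms(3) and ne = assms(4) and mum = assms(5) and pos = assms(7)
  obtain B where B: "\<forall>x\<in>\<Omega>. \<bar>\<mu> x\<bar> \<le> B" using assms(6) by blast
  obtain R where R: "\<forall>x\<in>\<Omega>. norm x \<le> R" using bd by (meson bounded_iff)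
  have Os: "\<Omega> \<in> sets lebesgue" using op by auto
  obtain z where z: "z \<in> \<Omega>" using ne by blast
  have B0: "B \<ge> 0" using B z by (meson abs_ge_zero order_trans)
  have R0: "R \<ge> 0" using R z by (meson norm_ge_zero order_trans)
  interpret fm: finite_measure "lebesgue_on \<Omega>"
    using Os bd by (intro finite_measure_lebesgue_on bounded_set_imp_lmeasurable)
  define \<sigma> where "\<sigma> = sigma_basis b w"
  have sm: "\<sigma> i \<in> borel_measurable (lebesgue_on \<Omega>)" for i
    unfolding \<sigma>_def by (rule continuous_imp_measurable_on_sets_lebesgue[OF cont_sigma Os])
  have sb: "\<bar>\<sigma> i x\<bar> \<le> 1 + \<bar>b i\<bar> + norm (w i) * R" if "x \<in> \<Omega>" for i x
  proof -
    have "\<bar>b i + w i \<bullet> x\<bar> \<le> \<bar>b i\<bar> + norm (w i) * norm x"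
      using Cauchy_Schwarz_ineq2[of "w i" x] by linarith
    also have "\<dots> \<le> \<bar>b i\<bar> + norm (w i) * R" using R that by (simp add: mult_left_mono)
    finally show ?thesis unfolding \<sigma>_def sigma_basis_def relu_def by auto
  qed
  have int: "integrable (lebesgue_on \<Omega>) (\<lambda>x. \<mu> x * \<sigma> i x * \<sigma> j x)" for i j
  proof (rule fm.integrable_const_bound[where B="B * (1 + \<bar>b i\<bar> + norm (w i) * R) * (1 + \<bar>b j\<bar> + norm (w j) * R)"])
    show "AE x in lebesgue_on \<Omega>. norm (\<mu> x * \<sigma> i x * \<sigma> j x) \<le> B * (1 + \<bar>b i\<bar> + norm (w i) * R) * (1 + \<bar>b j\<bar> + norm (w j) * R)"
    proof (rule AE_I2)
      fix x assume "x \<in> space (lebesgue_on \<Omega>)"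
      hence x: "x \<in> \<Omega>" by simp
      show "norm (\<mu> x * \<sigma> i x * \<sigma> j x) \<le> B * (1 + \<bar>b i\<bar> + norm (w i) * R) * (1 + \<bar>b j\<bar> + norm (w j) * R)"
      proof -
        have "0 \<le> 1 + \<bar>b i\<bar> + norm (w i) * R" using R0 by simp
        thus ?thesis unfolding real_norm_def abs_mult
          using B x sb[OF x, of i] sb[OF x, of j] B0
          by (intro mult_mono) auto
      qed
    qed
    show "(\<lambda>x. \<mu> x * \<sigma> i x * \<sigma> j x) \<in> borel_measurable (lebesgue_on \<Omega>)"
      using mum sm by measurable
  qed
  have sym: "\<forall>i\<le>n. \<forall>j\<le>n. mass_matrix \<Omega> \<mu> b w i j = mass_matrix \<Omega> \<mu> b w j i"
    unfolding mass_matrix_def by (simp add: mult_ac)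
  have pd: "(\<Sum>i\<le>n. \<Sum>j\<le>n. c i * mass_matrix \<Omega> \<mu> b w i j * c j) > 0" if c: "\<exists>i\<le>n. c i \<noteq> 0" for c
  proof -
    define f where "f x = (\<Sum>i\<le>n. c i * \<sigma> i x)" for x
    have pw: "(\<Sum>i\<le>n. \<Sum>j\<le>n. c i * c j * (\<mu> x * \<sigma> i x * \<sigma> j x)) = \<mu> x * (f x)\<^sup>2" for x
    proof -
      have "(f x)\<^sup>2 = (\<Sum>i\<le>n. \<Sum>j\<le>n. (c i * \<sigma> i x) * (c j * \<sigma> j x))"
        unfolding f_def power2_eq_square by (rule sum_product)
      thus ?thesis by (simp add: sum_distrib_left mult_ac)
    qed
    have "(\<Sum>i\<le>n. \<Sum>j\<le>n. c i * mass_matrix \<Omega> \<mu> b w i j * c j)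
        = (\<Sum>i\<le>n. \<Sum>j\<le>n. integral\<^sup>L (lebesgue_on \<Omega>) (\<lambda>x. c i * c j * (\<mu> x * \<sigma> i x * \<sigma> j x)))"
      unfolding mass_matrix_def \<sigma>_def[symmetric]
      by (intro sum.cong refl, subst integral_mult_right_zero) (simp add: mult_ac)
    also have "\<dots> = integral\<^sup>L (lebesgue_on \<Omega>) (\<lambda>x. \<Sum>i\<le>n. \<Sum>j\<le>n. c i * c j * (\<mu> x * \<sigma> i x * \<sigma> j x))"
      using int by (simp add: integral_sum)
    also have "\<dots> = integral\<^sup>L (lebesgue_on \<Omega>) (\<lambda>x. \<mu> x * (f x)\<^sup>2)"
      using pw by simp
    finally have eq: "(\<Sum>i\<le>n. \<Sum>j\<le>n. c i * mass_matrix \<Omega> \<mu> b w i j * c j) = integral\<^sup>L (lebesgue_on \<Omega>) (\<lambda>x. \<mu> x * (f x)\<^sup>2)" .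
    have intf: "integrable (lebesgue_on \<Omega>) (\<lambda>x. \<mu> x * (f x)\<^sup>2)"
    proof -
      have "integrable (lebesgue_on \<Omega>) (\<lambda>x. \<Sum>i\<le>n. \<Sum>j\<le>n. c i * c j * (\<mu> x * \<sigma> i x * \<sigma> j x))"
        using int by auto
      moreover have "(\<lambda>x. \<Sum>i\<le>n. \<Sum>j\<le>n. c i * c j * (\<mu> x * \<sigma> i x * \<sigma> j x)) = (\<lambda>x. \<mu> x * (f x)\<^sup>2)"
        using pw by simp
      ultimately show ?thesis by simp
    qed
    have nn: "AE x in lebesgue_on \<Omega>. 0 \<le> \<mu> x * (f x)\<^sup>2" using pos by eventually_elim simp
    have ge: "integral\<^sup>L (lebesgue_on \<Omega>) (\<lambda>x. \<mu> x * (f x)\<^sup>2) \<ge> 0"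
      using nn by (rule integral_nonneg_AE)
    have "integral\<^sup>L (lebesgue_on \<Omega>) (\<lambda>x. \<mu> x * (f x)\<^sup>2) \<noteq> 0"
    proof
      assume "integral\<^sup>L (lebesgue_on \<Omega>) (\<lambda>x. \<mu> x * (f x)\<^sup>2) = 0"
      hence "AE x in lebesgue_on \<Omega>. \<mu> x * (f x)\<^sup>2 = 0" using integral_nonneg_eq_0_iff_AE[OF intf nn] by simp
      hence ae: "AE x in lebesgue_on \<Omega>. f x = 0" using pos by eventually_elim auto
      have cf: "continuous_on \<Omega> f" unfolding f_def \<sigma>_def by (intro continuous_intros cont_sigma)
      have Z: "\<forall>x\<in>\<Omega>. (\<Sum>i\<le>n. c i * sigma_basis b w i x) = 0"
        using zero_on_open[OF op cf ae] unfolding f_def \<sigma>_def by blast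
      have ck: "c k = 0" if "k \<in> {1..n}" for k
        using geom[OF op assms(8) assms(9) Z that] .
      obtain x0 where x0: "x0 \<in> \<Omega>" using ne by blast
      have "(\<Sum>i\<le>n. c i * sigma_basis b w i x0) = (\<Sum>i\<le>n. if i = 0 then c 0 else 0)"
        using ck by (intro sum.cong) (auto simp: sigma_basis_def)
      hence "c 0 = 0" using Z x0 by simp
      hence "\<forall>i\<le>n. c i = 0" using ck by (metis One_nat_def Suc_leI atLeastAtMost_iff not_gr0)
      thus False using c by blast
    qed
    thus ?thesis using eq ge by linarith
  qed
  show ?thesis unfolding sym_pos_def_def using sym pd by blast
qed

end
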